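(* Let $\mathbf{k}$ be a field and $m\ge2$. Let $u\in{\sf{Bir}}(\mathbb{P}^m_\mathbf{k})$ be a diagonal linear transformation, $u(x_1,\dots,x_m)=(u_1x_1,\dots,u_mx_m)$ in affine coordinates, with $u_i\in\mathbf{k}^\times$. Then $u$ is at least exponentially distorted in ${\sf{Bir}}(\mathbb{P}^m_\mathbf{k})$: there is a finitely generated subgroup $\Gamma\le{\sf{Bir}}(\mathbb{P}^m_\mathbf{k})$ containing $u$ with $\exp(n)\preceq\delta^\Gamma_u(n)$ (where $\delta^\Gamma_u=\infty$ if $u$ has finite order).
   Context: For functions, $f\preceq g$ means there are $C,C',C''>0$ with $f(x)\le Cg(C'x)+C''$. For a finitely generated group $\Gamma$ with finite symmetric generating set $S\ni1$ and $c\in\Gamma$, $\delta_{c,S}(n)=\sup\{m\in\mathbf{N}: c^m\in S^n\}$; its $\simeq$-class $\delta^\Gamma_c$ is independent of $S$. *)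

theory Defs
  imports "HOL-Library.Poly_Mapping" "HOL-Computational_Algebra.Fraction_Field"
    "HOL-Algebra.Generated_Groups" "HOL-Library.Extended_Real"
begin

text \<open>Polynomials in the variables indexed by the finite type 'n (so m = CARD('n))
  over the field 'k, and the rational function field k(x_1,...,x_m).\<close>
type_synonym ('n, 'k) mpoly = "('n \<Rightarrow>\<^sub>0 nat) \<Rightarrow>\<^sub>0 'k"
type_synonym ('n, 'k) ratfun = "('n, 'k) mpoly fract"

definition rconst :: "'k::field \<Rightarrow> ('n::{finite,linorder}, 'k) ratfun" where
  "rconst c = Fraction_Field.Fract (Poly_Mapping.single 0 c) 1"

definition rvar :: "'n::{finite,linorder} \<Rightarrow> ('n, 'k::field) ratfun" where
  "rvar i = Fraction_Field.Fract (Poly_Mapping.single (Poly_Mapping.single i 1) 1) 1"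

definition k_aut :: "(('n::{finite,linorder}, 'k::field) ratfun \<Rightarrow> ('n, 'k) ratfun) \<Rightarrow> bool" where
  "k_aut \<sigma> \<longleftrightarrow> bij \<sigma> \<and> (\<forall>a b. \<sigma> (a + b) = \<sigma> a + \<sigma> b) \<and> (\<forall>a b. \<sigma> (a * b) = \<sigma> a * \<sigma> b)
      \<and> (\<forall>c. \<sigma> (rconst c) = rconst c)"

text \<open>The Cremona group Bir(P^m_k): a birational map f is identified with its pullback
  f^* on the function field; since (f o g)^* = g^* o f^*, the group law is reversed composition.\<close>
definition Bir :: "(('n::{finite,linorder}, 'k::field) ratfun \<Rightarrow> ('n, 'k) ratfun) monoid" where
  "Bir = \<lparr>carrier = {\<sigma>. k_aut \<sigma>}, mult = (\<lambda>\<sigma> \<tau>. \<tau> \<circ> \<sigma>), one = id\<rparr>"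

definition word_ball :: "('a, 'b) monoid_scheme \<Rightarrow> 'a set \<Rightarrow> nat \<Rightarrow> 'a set" where
  "word_ball G S n = {foldr (\<otimes>\<^bsub>G\<^esub>) xs \<one>\<^bsub>G\<^esub> | xs. set xs \<subseteq> S \<and> length xs = n}"

definition distortion :: "('a, 'b) monoid_scheme \<Rightarrow> 'a set \<Rightarrow> 'a \<Rightarrow> nat \<Rightarrow> enat" where
  "distortion G S c n = Sup {enat m | m. c [^]\<^bsub>G\<^esub> m \<in> word_ball G S n}"

definition asym_preceq :: "(nat \<Rightarrow> real) \<Rightarrow> (nat \<Rightarrow> enat) \<Rightarrow> bool" where
  "asym_preceq f g \<longleftrightarrow> (\<exists>C (C'::nat) C''. C > 0 \<and> C' > 0 \<and> C'' > 0 \<and>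
      (\<forall>x. ereal (f x) \<le> ereal C * ereal_of_enat (g (C' * x)) + ereal C''))"

end

theory Submission
  imports Defs
begin


lemma pm_sum_rep: "p = (\<Sum>v\<in>Poly_Mapping.keys p. Poly_Mapping.single v (Poly_Mapping.lookup p v))"
  by (simp add: poly_mapping_eq_iff fun_eq_iff lookup_sum lookup_single when_def
       in_keys_iff sum.delta')

definition hmap :: "('a \<Rightarrow> 'b) \<Rightarrow> ('a \<Rightarrow> 'k::comm_ring_1) \<Rightarrow> ('a \<Rightarrow>\<^sub>0 'k) \<Rightarrow> ('b \<Rightarrow>\<^sub>0 'k)" where
  "hmap T \<chi> p = (\<Sum>v\<in>Poly_Mapping.keys p. Poly_Mapping.single (T v) (\<chi> v * Poly_Mapping.lookup p v))"

lemma hmap_superset: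
  assumes "finite A" "Poly_Mapping.keys p \<subseteq> A"
  shows "hmap T \<chi> p = (\<Sum>v\<in>A. Poly_Mapping.single (T v) (\<chi> v * Poly_Mapping.lookup p v))"
  unfolding hmap_def
  by (rule sum.mono_neutral_left[OF assms]) (auto simp: in_keys_iff)

lemma hmap_add: "hmap T \<chi> (p + q) = hmap T \<chi> p + hmap T \<chi> q"
proof -
  let ?A = "Poly_Mapping.keys p \<union> Poly_Mapping.keys q"
  have f: "finite ?A" by simp
  have "Poly_Mapping.keys (p + q) \<subseteq> ?A" by (rule keys_add)
  then have "hmap T \<chi> (p + q) = (\<Sum>v\<in>?A. Poly_Mapping.single (T v) (\<chi> v * Poly_Mapping.lookup (p+q) v))"
    using hmap_superset[OF f] by blast
  also have "\<dots> = (\<Sum>v\<in>?A. Poly_Mapping.single (T v) (\<chi> v * Poly_Mapping.lookup p v))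
      + (\<Sum>v\<in>?A. Poly_Mapping.single (T v) (\<chi> v * Poly_Mapping.lookup q v))"
    by (simp add: lookup_add distrib_left single_add sum.distrib)
  also have "\<dots> = hmap T \<chi> p + hmap T \<chi> q"
    using hmap_superset[OF f Un_upper1, of T \<chi>] hmap_superset[OF f Un_upper2, of T \<chi>] by (simp only:)
  finally show ?thesis .
qed

lemma hmap_zero [simp]: "hmap T \<chi> 0 = 0"
  by (simp add: hmap_def)

lemma hmap_single [simp]: "hmap T \<chi> (Poly_Mapping.single v c) = Poly_Mapping.single (T v) (\<chi> v * c)"
  by (cases "c = 0") (simp_all add: hmap_def)

lemma hmap_sum: "hmap T \<chi> (\<Sum>i\<in>I. f i) = (\<Sum>i\<in>I. hmap T \<chi> (f i))"
  by (induction I rule: infinite_finite_induct) (simp_all add: hmap_add)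

lemma hmap_mult:
  fixes T :: "'a::comm_monoid_add \<Rightarrow> 'b::comm_monoid_add"
  assumes T: "\<And>v w. T (v + w) = T v + T w" and X: "\<And>v w. \<chi> (v + w) = \<chi> v * \<chi> w"
  shows "hmap T \<chi> (p * q) = hmap T \<chi> p * hmap T \<chi> q"
proof -
  have "p * q = (\<Sum>v\<in>Poly_Mapping.keys p. Poly_Mapping.single v (Poly_Mapping.lookup p v)) * (\<Sum>w\<in>Poly_Mapping.keys q. Poly_Mapping.single w (Poly_Mapping.lookup q w))"
    using pm_sum_rep[of p] pm_sum_rep[of q] by simp
  also have "\<dots> = (\<Sum>v\<in>Poly_Mapping.keys p. \<Sum>w\<in>Poly_Mapping.keys q. Poly_Mapping.single (v + w) (Poly_Mapping.lookup p v * Poly_Mapping.lookup q w))"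
    by (simp add: sum_product mult_single)
  finally have pq: "p * q = \<dots>" .
  have "hmap T \<chi> p * hmap T \<chi> q = (\<Sum>v\<in>Poly_Mapping.keys p. \<Sum>w\<in>Poly_Mapping.keys q.
      Poly_Mapping.single (T v) (\<chi> v * Poly_Mapping.lookup p v) * Poly_Mapping.single (T w) (\<chi> w * Poly_Mapping.lookup q w))"
    by (simp add: hmap_def sum_product)
  also have "\<dots> = (\<Sum>v\<in>Poly_Mapping.keys p. \<Sum>w\<in>Poly_Mapping.keys q. Poly_Mapping.single (T (v + w)) (\<chi> (v + w) * (Poly_Mapping.lookup p v * Poly_Mapping.lookup q w)))"
    by (simp add: mult_single T X mult_ac)
  finally show ?thesis using pq by (simp add: hmap_sum)
qed

lemma hmap_lookup:
  assumes "inj T"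
  shows "Poly_Mapping.lookup (hmap T \<chi> p) (T v) = \<chi> v * Poly_Mapping.lookup p v"
proof -
  have "Poly_Mapping.lookup (hmap T \<chi> p) (T v) = (\<Sum>w\<in>Poly_Mapping.keys p. (\<chi> w * Poly_Mapping.lookup p w when T w = T v))"
    by (simp add: hmap_def lookup_sum lookup_single)
  also have "\<dots> = (\<Sum>w\<in>Poly_Mapping.keys p. (if w = v then \<chi> w * Poly_Mapping.lookup p w else 0))"
    using assms by (intro sum.cong) (auto simp: when_def inj_eq)
  also have "\<dots> = \<chi> v * Poly_Mapping.lookup p v"
    by (simp add: sum.delta' in_keys_iff)
  finally show ?thesis .
qed

lemma hmap_eq0:
  assumes "inj T" "\<And>v. \<chi> v \<noteq> (0::'k::idom)" "hmap T \<chi> p = 0"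
  shows "p = 0"
proof -
  have "\<chi> v * Poly_Mapping.lookup p v = 0" for v
    using hmap_lookup[OF assms(1), of \<chi> p v] assms(3) by simp
  then show ?thesis using assms(2) by (simp add: poly_mapping_eq_iff fun_eq_iff)
qed

definition fmap :: "('a::idom \<Rightarrow> 'b::idom) \<Rightarrow> 'a fract \<Rightarrow> 'b fract" where
  "fmap h x = (SOME y. \<exists>a b. b \<noteq> 0 \<and> x = Fraction_Field.Fract a b \<and> y = Fraction_Field.Fract (h a) (h b))"

locale rhom =
  fixes h :: "'a::idom \<Rightarrow> 'b::idom"
  assumes add: "h (a + b) = h a + h b" and mult: "h (a * b) = h a * h b" and one: "h 1 = 1"
    and nz: "b \<noteq> 0 \<Longrightarrow> h b \<noteq> 0"
begin

lemma fmap_Fract: assumes "b \<noteq> 0" shows "fmap h (Fraction_Field.Fract a b) = Fraction_Field.Fract (h a) (h b)"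
  unfolding fmap_def
proof (rule some_equality)
  show "\<exists>a' b'. b' \<noteq> 0 \<and> Fraction_Field.Fract a b = Fraction_Field.Fract a' b' \<and> Fraction_Field.Fract (h a) (h b) = Fraction_Field.Fract (h a') (h b')"
    using assms by blast
next
  fix y assume "\<exists>a' b'. b' \<noteq> 0 \<and> Fraction_Field.Fract a b = Fraction_Field.Fract a' b' \<and> y = Fraction_Field.Fract (h a') (h b')"
  then obtain a' b' where *: "b' \<noteq> 0" "Fraction_Field.Fract a b = Fraction_Field.Fract a' b'" "y = Fraction_Field.Fract (h a') (h b')" by blast
  then have "a * b' = a' * b" using assms by (simp add: eq_fract)
  then have "h a * h b' = h a' * h b" by (metis mult)
  then show "y = Fraction_Field.Fract (h a) (h b)" using * assms nz by (simp add: eq_fract)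
qed

lemma fmap_add: "fmap h (x + y) = fmap h x + fmap h y"
  by (cases x; cases y) (simp add: fmap_Fract add mult nz)

lemma fmap_mult: "fmap h (x * y) = fmap h x * fmap h y"
  by (cases x; cases y) (simp add: fmap_Fract mult nz)

end


section \<open>Part C: generation and uniqueness\<close>

definition rmono :: "('n::{finite,linorder} \<Rightarrow>\<^sub>0 nat) \<Rightarrow> ('n, 'k::field) ratfun" where
  "rmono v = Fraction_Field.Fract (Poly_Mapping.single v 1) 1"

lemma rconst_mult: "rconst (a * b) = (rconst a * rconst b :: ('n::{finite,linorder}, 'k::field) ratfun)"
  by (simp add: rconst_def mult_single)

lemma rconst_add: "rconst (a + b) = (rconst a + rconst b :: ('n::{finite,linorder}, 'k::field) ratfun)"
  by (simp add: rconst_def single_add)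

lemma rconst_1 [simp]: "rconst 1 = (1 :: ('n::{finite,linorder}, 'k::field) ratfun)"
  by (simp add: rconst_def fract_collapse)

lemma rconst_0 [simp]: "rconst 0 = (0 :: ('n::{finite,linorder}, 'k::field) ratfun)"
  by (simp add: rconst_def fract_collapse)

lemma mono_0 [simp]: "rmono 0 = 1"
  by (simp add: rmono_def fract_collapse)

lemma mono_add: "rmono (v + w) = (rmono v * rmono w :: ('n::{finite,linorder}, 'k::field) ratfun)"
  by (simp add: rmono_def mult_single)

lemma rvar_mono: "rvar i = rmono (Poly_Mapping.single i 1)"
  by (simp add: rvar_def rmono_def)

lemma mono_single_pow: "rmono (Poly_Mapping.single i n) = (rvar i ^ n :: ('n::{finite,linorder}, 'k::field) ratfun)"
proof (induction n)
  case 0 then show ?case by simp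
next
  case (Suc n)
  have "Poly_Mapping.single i (Suc n) = Poly_Mapping.single i 1 + Poly_Mapping.single i n"
    by (simp add: single_add[symmetric])
  then show ?case using Suc by (simp add: mono_add rvar_mono)
qed

lemma mono_prod: "rmono v = (\<Prod>i\<in>UNIV. rvar i ^ Poly_Mapping.lookup v i :: ('n::{finite,linorder}, 'k::field) ratfun)"
proof -
  have "\<And>I. rmono (\<Sum>i\<in>I. Poly_Mapping.single i (Poly_Mapping.lookup v i)) = (\<Prod>i\<in>I. rvar i ^ Poly_Mapping.lookup v i :: ('n, 'k) ratfun)"
  proof -
    fix I :: "'n set"
    show "rmono (\<Sum>i\<in>I. Poly_Mapping.single i (Poly_Mapping.lookup v i)) = (\<Prod>i\<in>I. rvar i ^ Poly_Mapping.lookup v i :: ('n, 'k) ratfun)"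
      by (induction I rule: infinite_finite_induct) (simp_all add: mono_add mono_single_pow)
  qed
  moreover have "v = (\<Sum>i\<in>UNIV. Poly_Mapping.single i (Poly_Mapping.lookup v i))"
    by (simp add: poly_mapping_eq_iff fun_eq_iff lookup_sum lookup_single when_def)
  ultimately show ?thesis by metis
qed

lemma Fract_single: "Fraction_Field.Fract (Poly_Mapping.single v c) 1 = (rconst c * rmono v :: ('n::{finite,linorder}, 'k::field) ratfun)"
  by (simp add: rconst_def rmono_def mult_single)

lemma Fract_sum: "Fraction_Field.Fract (\<Sum>i\<in>I. f i) 1 = (\<Sum>i\<in>I. Fraction_Field.Fract (f i) (1::'a::idom))"
proof (induction I rule: infinite_finite_induct)
  case (insert x F)
  have "Fraction_Field.Fract (f x + sum f F) 1 = Fraction_Field.Fract (f x) 1 + Fraction_Field.Fract (sum f F) 1" by simp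
  then show ?case using insert by simp
qed (simp_all add: fract_collapse)

lemma Fract_poly: "Fraction_Field.Fract p 1 = (\<Sum>v\<in>Poly_Mapping.keys p. rconst (Poly_Mapping.lookup p v) * rmono v :: ('n::{finite,linorder}, 'k::field) ratfun)"
proof -
  have "Fraction_Field.Fract p 1 = Fraction_Field.Fract (\<Sum>v\<in>Poly_Mapping.keys p. Poly_Mapping.single v (Poly_Mapping.lookup p v)) (1 :: ('n,'k) mpoly)"
    using pm_sum_rep[of p] by simp
  also have "\<dots> = (\<Sum>v\<in>Poly_Mapping.keys p. rconst (Poly_Mapping.lookup p v) * rmono v)"
    by (simp add: Fract_sum Fract_single)
  finally show ?thesis .
qed

lemma gen_induct:
  fixes R :: "('n::{finite,linorder}, 'k::field) ratfun set"
  assumes c: "\<And>c. rconst c \<in> R" and v: "\<And>i. rvar i \<in> R"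
    and a: "\<And>x y. x \<in> R \<Longrightarrow> y \<in> R \<Longrightarrow> x + y \<in> R"
    and m: "\<And>x y. x \<in> R \<Longrightarrow> y \<in> R \<Longrightarrow> x * y \<in> R"
    and i: "\<And>x. x \<in> R \<Longrightarrow> inverse x \<in> R"
  shows "x \<in> R"
proof -
  have one: "1 \<in> R" using c[of 1] by simp
  have zero: "0 \<in> R" using c[of 0] by simp
  have pw: "y \<in> R \<Longrightarrow> y ^ n \<in> R" for y n
    by (induction n) (simp_all add: one m)
  have pr: "(\<And>i. f i \<in> R) \<Longrightarrow> prod f I \<in> R" for f and I :: "'n set"
    by (induction I rule: infinite_finite_induct) (simp_all add: one m)
  have sm: "(\<And>i. f i \<in> R) \<Longrightarrow> sum f I \<in> R" for f and I :: "('n \<Rightarrow>\<^sub>0 nat) set"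
    by (induction I rule: infinite_finite_induct) (simp_all add: zero a)
  have mo: "rmono w \<in> R" for w
    unfolding mono_prod by (rule pr) (simp add: pw v)
  have po: "Fraction_Field.Fract p 1 \<in> R" for p
    unfolding Fract_poly by (rule sm) (simp add: m c mo)
  obtain p q where "x = Fraction_Field.Fract p q" by (cases x) auto
  then have "x = Fraction_Field.Fract p 1 * inverse (Fraction_Field.Fract q 1)"
    by simp
  moreover have "Fraction_Field.Fract p 1 * inverse (Fraction_Field.Fract q 1) \<in> R" using po m i by blast
  ultimately show ?thesis by (simp only:)
qed

definition khom :: "(('n::{finite,linorder}, 'k::field) ratfun \<Rightarrow> ('n, 'k) ratfun) \<Rightarrow> bool" where
  "khom \<sigma> \<longleftrightarrow> (\<forall>a b. \<sigma> (a + b) = \<sigma> a + \<sigma> b) \<and> (\<forall>a b. \<sigma> (a * b) = \<sigma> a * \<sigma> b)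
      \<and> (\<forall>c. \<sigma> (rconst c) = rconst c)"

lemma khom_add: "khom \<sigma> \<Longrightarrow> \<sigma> (a + b) = \<sigma> a + \<sigma> b" by (simp add: khom_def)
lemma khom_mult: "khom \<sigma> \<Longrightarrow> \<sigma> (a * b) = \<sigma> a * \<sigma> b" by (simp add: khom_def)
lemma khom_const: "khom \<sigma> \<Longrightarrow> \<sigma> (rconst c) = rconst c" by (simp add: khom_def)
lemma khom_zero: "khom \<sigma> \<Longrightarrow> \<sigma> 0 = 0" using khom_const[of \<sigma> 0] by simp
lemma khom_one: "khom \<sigma> \<Longrightarrow> \<sigma> 1 = 1" using khom_const[of \<sigma> 1] by simp
lemma khom_pow: "khom \<sigma> \<Longrightarrow> \<sigma> (x ^ n) = \<sigma> x ^ n"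
  by (induction n) (simp_all add: khom_one khom_mult)

lemma khom_inverse: assumes "khom \<sigma>" shows "\<sigma> (inverse x) = inverse (\<sigma> x)"
proof (cases "x = 0")
  case True then show ?thesis using khom_zero[OF assms] by simp
next
  case False
  then have "\<sigma> x * \<sigma> (inverse x) = 1" using khom_mult[OF assms, of x "inverse x", symmetric] khom_one[OF assms] by simp
  then show ?thesis by (simp add: inverse_unique)
qed

lemma khom_unique:
  assumes "khom \<sigma>" "khom \<tau>" "\<And>i. \<sigma> (rvar i) = \<tau> (rvar i)"
  shows "\<sigma> = \<tau>"
proof
  fix x
  show "\<sigma> x = \<tau> x"
    using gen_induct[of "{x. \<sigma> x = \<tau> x}"] assms
    by (simp add: khom_add khom_mult khom_const khom_inverse)
qed

lemma khom_comp: "khom \<sigma> \<Longrightarrow> khom \<tau> \<Longrightarrow> khom (\<sigma> \<circ> \<tau>)"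
  by (simp add: khom_def)

lemma kaut_khom: "k_aut \<sigma> \<Longrightarrow> khom \<sigma>"
  by (simp add: k_aut_def khom_def)

lemma khom_kaut:
  assumes "khom \<sigma>" "\<And>i. rvar i \<in> range \<sigma>"
  shows "k_aut \<sigma>"
proof -
  have surj: "x \<in> range \<sigma>" for x
  proof (rule gen_induct[of "range \<sigma>"])
    show "rconst c \<in> range \<sigma>" for c using khom_const[OF assms(1), of c] by (metis rangeI)
    show "rvar i \<in> range \<sigma>" for i by (rule assms(2))
    show "x + y \<in> range \<sigma>" if hxy: "x \<in> range \<sigma>" "y \<in> range \<sigma>" for x y
    proof -
      obtain a b where "x = \<sigma> a" "y = \<sigma> b" using hxy by blast
      then have "x + y = \<sigma> (a + b)" using khom_add[OF assms(1)] by simp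
      then show ?thesis by simp
    qed
    show "x * y \<in> range \<sigma>" if hxy: "x \<in> range \<sigma>" "y \<in> range \<sigma>" for x y
    proof -
      obtain a b where "x = \<sigma> a" "y = \<sigma> b" using hxy by blast
      then have "x * y = \<sigma> (a * b)" using khom_mult[OF assms(1)] by simp
      then show ?thesis by simp
    qed
    show "inverse x \<in> range \<sigma>" if hx: "x \<in> range \<sigma>" for x
    proof -
      obtain a where "x = \<sigma> a" using hx by blast
      then have "inverse x = \<sigma> (inverse a)" using khom_inverse[OF assms(1)] by simp
      then show ?thesis by simp
    qed
  qed
  have neg: "\<sigma> (- x) = - \<sigma> x" for x
    using khom_add[OF assms(1), of x "- x"] khom_zero[OF assms(1)]
    by (simp add: eq_neg_iff_add_eq_0 add.commute)
  have "inj \<sigma>"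
  proof (rule injI)
    fix x y assume "\<sigma> x = \<sigma> y"
    then have z: "\<sigma> (x - y) = 0" using khom_add[OF assms(1), of x "- y"] neg by simp
    show "x = y"
    proof (rule ccontr)
      assume "x \<noteq> y"
      then have "\<sigma> ((x - y) * inverse (x - y)) = 1" using khom_one[OF assms(1)] by simp
      then show False using z khom_mult[OF assms(1)] by simp
    qed
  qed
  then have "bij \<sigma>" using surj by (simp add: bij_def surj_def) (metis rangeE)
  then show ?thesis using assms(1) by (simp add: k_aut_def khom_def)
qed


section \<open>Part D: concrete automorphisms\<close>

lemma rhom_hmap:
  fixes T :: "'a::{comm_monoid_add,linorder,ordered_cancel_comm_monoid_add} \<Rightarrow> 'a"
    and \<chi> :: "'a \<Rightarrow> 'k::field"
  assumes T: "\<And>v w. T (v + w) = T v + T w" "T 0 = 0" "inj T"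
    and X: "\<And>v w. \<chi> (v + w) = \<chi> v * \<chi> w" "\<chi> 0 = 1" "\<And>v. \<chi> v \<noteq> 0"
  shows "rhom (hmap T \<chi>)"
proof
  show "hmap T \<chi> (a + b) = hmap T \<chi> a + hmap T \<chi> b" for a b by (rule hmap_add)
  show "hmap T \<chi> (a * b) = hmap T \<chi> a * hmap T \<chi> b" for a b by (rule hmap_mult[OF T(1) X(1)])
  show "hmap T \<chi> 1 = 1" using hmap_single[of T \<chi> 0 1] T(2) X(2) by simp
  show "b \<noteq> 0 \<Longrightarrow> hmap T \<chi> b \<noteq> 0" for b using hmap_eq0[of T \<chi>, OF T(3) X(3)] by blast
qed

lemma khom_fmap:
  fixes h :: "('n::{finite,linorder}, 'k::field) mpoly \<Rightarrow> ('n, 'k) mpoly"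
  assumes "rhom h" "\<And>c. h (Poly_Mapping.single 0 c) = Poly_Mapping.single 0 c"
  shows "khom (fmap h)"
  unfolding khom_def
  using rhom.fmap_add[OF assms(1)] rhom.fmap_mult[OF assms(1)]
    rhom.fmap_Fract[OF assms(1)] rhom.one[OF assms(1)] assms(2)
  by (simp add: rconst_def)

lemma fmap_Fract1: "rhom h \<Longrightarrow> fmap h (Fraction_Field.Fract p 1) = Fraction_Field.Fract (h p) 1"
  using rhom.fmap_Fract[of h 1 p] rhom.one[of h] by simp

definition chi :: "('n::finite \<Rightarrow> 'k::field) \<Rightarrow> ('n \<Rightarrow>\<^sub>0 nat) \<Rightarrow> 'k" where
  "chi e v = (\<Prod>i\<in>UNIV. e i ^ Poly_Mapping.lookup v i)"

definition Dm :: "('n::{finite,linorder} \<Rightarrow> 'k::field) \<Rightarrow> ('n, 'k) ratfun \<Rightarrow> ('n, 'k) ratfun" where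
  "Dm e = fmap (hmap id (chi e))"

lemma rhom_D: assumes "\<forall>i. e i \<noteq> 0" shows "rhom (hmap id (chi e :: ('n::{finite,linorder} \<Rightarrow>\<^sub>0 nat) \<Rightarrow> 'k::field))"
  by (rule rhom_hmap) (auto simp: chi_def lookup_add power_add prod.distrib assms)

lemma khom_Dm: assumes "\<forall>i. e i \<noteq> 0" shows "khom (Dm e)"
  unfolding Dm_def by (rule khom_fmap[OF rhom_D[OF assms]]) (simp add: chi_def)

lemma chi_single: "chi e (Poly_Mapping.single i 1) = e i"
proof -
  have "chi e (Poly_Mapping.single i 1) = (\<Prod>j\<in>UNIV. if i = j then e j else 1)"
    unfolding chi_def by (intro prod.cong) (auto simp: lookup_single when_def)
  then show ?thesis by simp
qed

lemma Dm_rvar: assumes "\<forall>i. e i \<noteq> 0" shows "Dm e (rvar i) = rconst (e i) * rvar i"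
proof -
  have "Dm e (rvar i) = Fraction_Field.Fract (Poly_Mapping.single (Poly_Mapping.single i 1) (e i)) 1"
    using fmap_Fract1[OF rhom_D[OF assms]] by (simp add: Dm_def rvar_def chi_single chi_single[unfolded One_nat_def])
  then show ?thesis by (simp add: Fract_single rvar_mono)
qed

lemma rvar_nz: "rvar i \<noteq> (0 :: ('n::{finite,linorder}, 'k::field) ratfun)"
  by (simp add: rvar_def Zero_fract_def eq_fract) (metis lookup_single_eq lookup_zero one_neq_zero)

lemma rconst_nz: "c \<noteq> 0 \<Longrightarrow> rconst c \<noteq> (0 :: ('n::{finite,linorder}, 'k::field) ratfun)"
  by (simp add: rconst_def Zero_fract_def eq_fract) (metis lookup_single_eq lookup_zero)

lemma rconst_inverse: "rconst (inverse c) = (inverse (rconst c) :: ('n::{finite,linorder}, 'k::field) ratfun)"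
proof (cases "c = 0")
  case False
  then have "rconst c * rconst (inverse c) = (1 :: ('n, 'k) ratfun)" by (simp flip: rconst_mult)
  then show ?thesis by (simp add: inverse_unique)
qed simp

lemma kaut_Dm: fixes e :: "'n::{finite,linorder} \<Rightarrow> 'k::field"
  assumes "\<forall>i. e i \<noteq> 0" shows "k_aut (Dm e)"
proof (rule khom_kaut[OF khom_Dm[OF assms]])
  fix i
  have nz: "rconst (e i) \<noteq> (0::('n,'k) ratfun)" using rconst_nz assms by auto
  have h: "khom (Dm e)" by (rule khom_Dm[OF assms])
  have "Dm e (rconst (inverse (e i)) * rvar i) = rconst (inverse (e i)) * (rconst (e i) * rvar i)"
    using khom_mult[OF h] khom_const[OF h] Dm_rvar[OF assms, of i] by simp
  also have "\<dots> = rvar i" using nz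
    by (simp add: rconst_inverse left_inverse)
  finally have "Dm e (rconst (inverse (e i)) * rvar i) = rvar i" .
  then show "rvar i \<in> range (Dm e)" by (metis rangeI)
qed

definition Tg :: "'n \<Rightarrow> 'n \<Rightarrow> ('n \<Rightarrow>\<^sub>0 nat) \<Rightarrow> ('n \<Rightarrow>\<^sub>0 nat)" where
  "Tg i0 k0 v = v + Poly_Mapping.single i0 (Poly_Mapping.lookup v i0 + Poly_Mapping.lookup v k0)
     + Poly_Mapping.single k0 (Poly_Mapping.lookup v i0)"

definition Gm :: "'n::{finite,linorder} \<Rightarrow> 'n \<Rightarrow> ('n, 'k::field) ratfun \<Rightarrow> ('n, 'k) ratfun" where
  "Gm i0 k0 = fmap (hmap (Tg i0 k0) (\<lambda>_. 1))"

lemma Tg_lookup: "i0 \<noteq> k0 \<Longrightarrow> Poly_Mapping.lookup (Tg i0 k0 v) j =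
   (if j = i0 then 2 * Poly_Mapping.lookup v i0 + Poly_Mapping.lookup v k0
    else if j = k0 then Poly_Mapping.lookup v i0 + Poly_Mapping.lookup v k0
    else Poly_Mapping.lookup v j)"
  unfolding Tg_def by (simp add: lookup_add lookup_single when_def)

lemma Tg_inj: assumes "i0 \<noteq> k0" shows "inj (Tg i0 k0)"
proof (rule injI)
  fix v w assume eq: "Tg i0 k0 v = Tg i0 k0 w"
  have "Poly_Mapping.lookup v j = Poly_Mapping.lookup w j" for j
  proof -
    have a: "2 * Poly_Mapping.lookup v i0 + Poly_Mapping.lookup v k0 = 2 * Poly_Mapping.lookup w i0 + Poly_Mapping.lookup w k0"
      using arg_cong[OF eq, of "\<lambda>x. Poly_Mapping.lookup x i0"] by (simp add: Tg_lookup[OF assms])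
    have b: "Poly_Mapping.lookup v i0 + Poly_Mapping.lookup v k0 = Poly_Mapping.lookup w i0 + Poly_Mapping.lookup w k0"
      using arg_cong[OF eq, of "\<lambda>x. Poly_Mapping.lookup x k0"] assms by (simp add: Tg_lookup[OF assms])
    have c: "j \<noteq> i0 \<Longrightarrow> j \<noteq> k0 \<Longrightarrow> Poly_Mapping.lookup v j = Poly_Mapping.lookup w j"
      using arg_cong[OF eq, of "\<lambda>x. Poly_Mapping.lookup x j"] by (simp add: Tg_lookup[OF assms])
    have d1: "Poly_Mapping.lookup v i0 = Poly_Mapping.lookup w i0" using a b by linarith
    have d2: "Poly_Mapping.lookup v k0 = Poly_Mapping.lookup w k0" using a b by linarith
    show ?thesis using d1 d2 c by (cases "j = i0"; cases "j = k0") auto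
  qed
  then show "v = w" by (simp add: poly_mapping_eq_iff fun_eq_iff)
qed

lemma rhom_G: assumes "i0 \<noteq> k0" shows "rhom (hmap (Tg i0 k0) (\<lambda>_. 1::'k::field))"
proof (rule rhom_hmap)
  show "Tg i0 k0 (v + w) = Tg i0 k0 v + Tg i0 k0 w" for v w
    unfolding Tg_def by (simp add: lookup_add single_add ac_simps)
  show "Tg i0 k0 0 = 0" unfolding Tg_def by simp
  show "inj (Tg i0 k0)" by (rule Tg_inj[OF assms])
  show "(1::'k) = 1 * 1" by simp
  show "(1::'k) = 1" by simp
  show "(1::'k) \<noteq> 0" for v :: "'a \<Rightarrow>\<^sub>0 nat" by simp
qed

lemma khom_Gm: assumes "i0 \<noteq> k0" shows "khom (Gm i0 k0 :: ('n::{finite,linorder}, 'k::field) ratfun \<Rightarrow> _)"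
  unfolding Gm_def by (rule khom_fmap[OF rhom_G[OF assms]]) (simp add: Tg_def)

lemma Gm_rvar:
  assumes "i0 \<noteq> k0"
  shows "Gm i0 k0 (rvar j) = (if j = i0 then rvar i0 * rvar i0 * rvar k0
     else if j = k0 then rvar i0 * rvar k0 else (rvar j :: ('n::{finite,linorder}, 'k::field) ratfun))"
proof -
  have r: "rhom (hmap (Tg i0 k0) (\<lambda>_. 1::'k))" by (rule rhom_G[OF assms])
  have "Gm i0 k0 (rvar j) = (rmono (Tg i0 k0 (Poly_Mapping.single j 1)) :: ('n, 'k) ratfun)"
    using fmap_Fract1[OF r] by (simp add: Gm_def rvar_def rmono_def)
  moreover have "Tg i0 k0 (Poly_Mapping.single j 1) = (if j = i0 then Poly_Mapping.single i0 1 + Poly_Mapping.single i0 1 + Poly_Mapping.single k0 1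
     else if j = k0 then Poly_Mapping.single i0 1 + Poly_Mapping.single k0 1 else Poly_Mapping.single j 1)"
    using assms unfolding Tg_def by (simp add: lookup_single when_def ac_simps)
  ultimately show ?thesis by (simp add: mono_add rvar_mono)
qed

lemma kaut_Gm: assumes "i0 \<noteq> k0" shows "k_aut (Gm i0 k0 :: ('n::{finite,linorder}, 'k::field) ratfun \<Rightarrow> _)"
proof (rule khom_kaut[OF khom_Gm[OF assms]])
  fix j
  let ?G = "Gm i0 k0 :: ('n, 'k) ratfun \<Rightarrow> _"
  have hG: "khom ?G" by (rule khom_Gm[OF assms])
  have x: "rvar i0 \<noteq> (0::('n,'k) ratfun)" "rvar k0 \<noteq> (0::('n,'k) ratfun)" by (rule rvar_nz)+
  have g: "\<And>j. ?G (rvar j) = (if j = i0 then rvar i0 * rvar i0 * rvar k0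
     else if j = k0 then rvar i0 * rvar k0 else rvar j)" by (rule Gm_rvar[OF assms])
  have "?G (rvar i0 * inverse (rvar k0)) = ?G (rvar i0) * inverse (?G (rvar k0))"
    by (simp only: khom_mult[OF hG] khom_inverse[OF hG])
  then have a: "?G (rvar i0 * inverse (rvar k0)) = rvar i0"
    using x assms by (simp add: g field_simps)
  have "?G (rvar k0 * rvar k0 * inverse (rvar i0)) = ?G (rvar k0) * ?G (rvar k0) * inverse (?G (rvar i0))"
    by (simp only: khom_mult[OF hG] khom_inverse[OF hG])
  then have b: "?G (rvar k0 * rvar k0 * inverse (rvar i0)) = rvar k0"
    using x assms by (simp add: g field_simps)
  have c: "j \<noteq> i0 \<Longrightarrow> j \<noteq> k0 \<Longrightarrow> ?G (rvar j) = rvar j"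
    using Gm_rvar[OF assms, of j] by simp
  show "rvar j \<in> range ?G"
  proof (cases "j = i0")
    case True then show ?thesis using rangeI[of ?G "rvar i0 * inverse (rvar k0)"] a by simp
  next
    case F: False
    show ?thesis
    proof (cases "j = k0")
      case True then show ?thesis using rangeI[of ?G "rvar k0 * rvar k0 * inverse (rvar i0)"] b by simp
    next
      case False then show ?thesis using F c rangeI[of ?G "rvar j"] by simp
    qed
  qed
qed



section \<open>Part E: diagonal relations\<close>

lemma Dm_comp:
  fixes e e' :: "'n::{finite,linorder} \<Rightarrow> 'k::field"
  assumes "\<forall>i. e i \<noteq> 0" "\<forall>i. e' i \<noteq> 0"
  shows "Dm e \<circ> Dm e' = Dm (\<lambda>i. e i * e' i)"
proof (rule khom_unique)
  have n: "\<forall>i. e i * e' i \<noteq> 0" using assms by simp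
  show "khom (Dm e \<circ> Dm e')" by (rule khom_comp[OF khom_Dm[OF assms(1)] khom_Dm[OF assms(2)]])
  show "khom (Dm (\<lambda>i. e i * e' i))" by (rule khom_Dm[OF n])
  fix i
  show "(Dm e \<circ> Dm e') (rvar i) = Dm (\<lambda>i. e i * e' i) (rvar i)"
    using khom_mult[OF khom_Dm[OF assms(1)]] khom_const[OF khom_Dm[OF assms(1)]]
    by (simp add: Dm_rvar[OF assms(1)] Dm_rvar[OF assms(2)] Dm_rvar[OF n] rconst_mult mult_ac)
qed

lemma Dm_one: "Dm (\<lambda>_. 1::'k::field) = (id :: ('n::{finite,linorder}, 'k) ratfun \<Rightarrow> _)"
proof (rule khom_unique)
  show "khom (Dm (\<lambda>_. 1::'k))" by (rule khom_Dm) simp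
  show "khom (id :: ('n, 'k) ratfun \<Rightarrow> _)" by (simp add: khom_def)
  show "Dm (\<lambda>_. 1::'k) (rvar i) = id (rvar i)" for i :: 'n
    by (simp add: Dm_rvar)
qed

lemma Dm_pow:
  fixes e :: "'n::{finite,linorder} \<Rightarrow> 'k::field"
  assumes "\<forall>i. e i \<noteq> 0"
  shows "Dm e ^^ N = Dm (\<lambda>i. e i ^ N)"
proof (induction N)
  case 0 then show ?case by (simp add: Dm_one)
next
  case (Suc N)
  have "Dm e ^^ Suc N = Dm e \<circ> Dm (\<lambda>i. e i ^ N)" using Suc by simp
  also have "\<dots> = Dm (\<lambda>i. e i ^ Suc N)" using assms by (simp add: Dm_comp)
  finally show ?case .
qed

definition al :: "'n \<Rightarrow> 'n \<Rightarrow> ('n \<Rightarrow> 'k::field) \<Rightarrow> ('n \<Rightarrow> 'k)" where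
  "al i0 k0 e = e(i0 := e i0 ^ 2 * e k0, k0 := e i0 * e k0)"

definition be :: "'n \<Rightarrow> 'n \<Rightarrow> ('n \<Rightarrow> 'k::field) \<Rightarrow> ('n \<Rightarrow> 'k)" where
  "be i0 k0 e = e(i0 := e i0 / e k0, k0 := e k0 ^ 2 / e i0)"

lemma Gm_conj:
  fixes e :: "'n::{finite,linorder} \<Rightarrow> 'k::field"
  assumes ne: "i0 \<noteq> k0" and nz: "\<forall>i. e i \<noteq> 0"
  shows "Gm i0 k0 \<circ> Dm (al i0 k0 e) = Dm e \<circ> Gm i0 k0"
proof (rule khom_unique)
  have n: "\<forall>i. al i0 k0 e i \<noteq> 0" using nz by (simp add: al_def)
  have hG: "khom (Gm i0 k0 :: ('n, 'k) ratfun \<Rightarrow> _)" by (rule khom_Gm[OF ne])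
  have hD: "khom (Dm e)" by (rule khom_Dm[OF nz])
  show "khom (Gm i0 k0 \<circ> Dm (al i0 k0 e))" by (rule khom_comp[OF hG khom_Dm[OF n]])
  show "khom (Dm e \<circ> Gm i0 k0)" by (rule khom_comp[OF hD hG])
  fix j
  show "(Gm i0 k0 \<circ> Dm (al i0 k0 e)) (rvar j) = (Dm e \<circ> Gm i0 k0) (rvar j)"
  proof -
    have "(Gm i0 k0 \<circ> Dm (al i0 k0 e)) (rvar j) = Gm i0 k0 (rconst (al i0 k0 e j) * rvar j)"
      by (simp add: Dm_rvar[OF n])
    also have "\<dots> = rconst (al i0 k0 e j) * Gm i0 k0 (rvar j)"
      by (simp add: khom_mult[OF hG] khom_const[OF hG])
    finally have L: "(Gm i0 k0 \<circ> Dm (al i0 k0 e)) (rvar j) = rconst (al i0 k0 e j) * Gm i0 k0 (rvar j)" .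
    show ?thesis unfolding L using ne
      by (cases "j = i0"; cases "j = k0")
        (simp_all add: al_def Gm_rvar[OF ne] khom_mult[OF hD] Dm_rvar[OF nz] rconst_mult power2_eq_square mult_ac)
  qed
qed


lemma al_nz: "\<forall>i. e i \<noteq> 0 \<Longrightarrow> \<forall>i. al i0 k0 e i \<noteq> (0::'k::field)"
  by (simp add: al_def)
lemma be_nz: "\<forall>i. e i \<noteq> 0 \<Longrightarrow> \<forall>i. be i0 k0 e i \<noteq> (0::'k::field)"
  by (simp add: be_def)
lemma al_pow_nz: "\<forall>i. e i \<noteq> 0 \<Longrightarrow> \<forall>i. (al i0 k0 ^^ j) e i \<noteq> (0::'k::field)"
  by (induction j) (simp_all add: al_nz)
lemma be_pow_nz: "\<forall>i. e i \<noteq> 0 \<Longrightarrow> \<forall>i. (be i0 k0 ^^ j) e i \<noteq> (0::'k::field)"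
  by (induction j) (simp_all add: be_nz)

lemma al_be: "i0 \<noteq> k0 \<Longrightarrow> \<forall>i. e i \<noteq> 0 \<Longrightarrow> al i0 k0 (be i0 k0 e) = (e::'n \<Rightarrow> 'k::field)"
  by (auto simp: al_def be_def fun_eq_iff power2_eq_square field_simps)
lemma be_al: "i0 \<noteq> k0 \<Longrightarrow> \<forall>i. e i \<noteq> 0 \<Longrightarrow> be i0 k0 (al i0 k0 e) = (e::'n \<Rightarrow> 'k::field)"
  by (auto simp: al_def be_def fun_eq_iff power2_eq_square field_simps)

lemma al_mult: "i0 \<noteq> k0 \<Longrightarrow> al i0 k0 (\<lambda>l. x l * y l) l = al i0 k0 x l * al i0 k0 y l * (1::'k::field)"
  by (auto simp: al_def power2_eq_square mult_ac)
lemma be_mult: "i0 \<noteq> k0 \<Longrightarrow> be i0 k0 (\<lambda>l. x l * y l) l = be i0 k0 x l * be i0 k0 y l * (1::'k::field)"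
  by (auto simp: be_def power2_eq_square mult_ac)

lemma al_be_cube: "i0 \<noteq> k0 \<Longrightarrow> \<forall>i. x i \<noteq> 0 \<Longrightarrow> (\<forall>l. l \<noteq> i0 \<longrightarrow> l \<noteq> k0 \<longrightarrow> x l = 1) \<Longrightarrow>
    al i0 k0 x l * be i0 k0 x l = (x l ^ 3 :: 'k::field)"
  by (cases "l = i0"; cases "l = k0") (auto simp: al_def be_def power2_eq_square power3_eq_cube field_simps)

lemma al_supp: "l \<noteq> i0 \<Longrightarrow> l \<noteq> k0 \<Longrightarrow> al i0 k0 x l = x l"
  by (simp add: al_def)
lemma be_supp: "l \<noteq> i0 \<Longrightarrow> l \<noteq> k0 \<Longrightarrow> be i0 k0 x l = x l"
  by (simp add: be_def)
lemma al_pow_supp: "l \<noteq> i0 \<Longrightarrow> l \<noteq> k0 \<Longrightarrow> (al i0 k0 ^^ j) x l = x l"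
  by (induction j) (simp_all add: al_supp)
lemma be_pow_supp: "l \<noteq> i0 \<Longrightarrow> l \<noteq> k0 \<Longrightarrow> (be i0 k0 ^^ j) x l = x l"
  by (induction j) (simp_all add: be_supp)

fun cc :: "nat \<Rightarrow> nat" where
  "cc 0 = 2" | "cc (Suc 0) = 3" | "cc (Suc (Suc j)) = 3 * cc (Suc j) - cc j"

lemma cc_mono: "cc j \<le> cc (Suc j)"
proof (induction j)
  case 0 then show ?case by simp
next
  case (Suc j) then show ?case by simp
qed

lemma cc_rec: "cc (Suc (Suc j)) + cc j = 3 * cc (Suc j)"
  using cc_mono[of j] by simp

lemma cc_ge: "2 ^ j \<le> cc j"
proof (induction j rule: cc.induct)
  case (3 j)
  have "2 * cc (Suc j) \<le> cc (Suc (Suc j))" using cc_mono[of j] by simp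
  then show ?case using 3 by simp
qed simp_all

lemma E_formula:
  fixes e :: "'n \<Rightarrow> 'k::field"
  assumes ne: "i0 \<noteq> k0" and nz: "\<forall>i. e i \<noteq> 0" and supp: "\<forall>l. l \<noteq> i0 \<longrightarrow> l \<noteq> k0 \<longrightarrow> e l = 1"
  shows "(be i0 k0 ^^ j) e l * (al i0 k0 ^^ j) e l = e l ^ cc j"
proof -
  define A where "A j = (al i0 k0 ^^ j) e" for j
  define B where "B j = (be i0 k0 ^^ j) e" for j
  define E where "E j l = B j l * A j l" for j l
  have Anz: "\<forall>i. A j i \<noteq> 0" for j unfolding A_def by (rule al_pow_nz[OF nz])
  have Bnz: "\<forall>i. B j i \<noteq> 0" for j unfolding B_def by (rule be_pow_nz[OF nz])
  have Enz: "\<forall>i. E j i \<noteq> 0" for j unfolding E_def using Anz Bnz by simp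
  have Esupp: "\<forall>l. l \<noteq> i0 \<longrightarrow> l \<noteq> k0 \<longrightarrow> E j l = 1" for j
    unfolding E_def A_def B_def using supp by (simp add: al_pow_supp be_pow_supp)
  have rec: "E (Suc (Suc j)) l * E j l = E (Suc j) l ^ 3" for j l
  proof -
    have a1: "al i0 k0 (B (Suc j)) = B j" unfolding B_def using al_be[OF ne be_pow_nz[OF nz]] by simp
    have b1: "be i0 k0 (A (Suc j)) = A j" unfolding A_def using be_al[OF ne al_pow_nz[OF nz]] by simp
    have "al i0 k0 (E (Suc j)) l = B j l * A (Suc (Suc j)) l"
      using al_mult[OF ne, of "B (Suc j)" "A (Suc j)" l] a1 unfolding E_def
      by (simp add: A_def del: funpow.simps) (simp add: A_def)
    moreover have "be i0 k0 (E (Suc j)) l = B (Suc (Suc j)) l * A j l"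
      using be_mult[OF ne, of "B (Suc j)" "A (Suc j)" l] b1 unfolding E_def
      by (simp add: B_def del: funpow.simps) (simp add: B_def)
    moreover have "al i0 k0 (E (Suc j)) l * be i0 k0 (E (Suc j)) l = E (Suc j) l ^ 3"
      by (rule al_be_cube[OF ne Enz Esupp])
    ultimately show ?thesis unfolding E_def by (simp add: mult_ac)
  qed
  have "E j l = e l ^ cc j"
  proof (induction j rule: cc.induct)
    case 1 then show ?case by (simp add: E_def A_def B_def power2_eq_square)
  next
    case 2
    have "al i0 k0 e l * be i0 k0 e l = e l ^ 3" by (rule al_be_cube[OF ne nz supp])
    then show ?case by (simp add: E_def A_def B_def mult.commute)
  next
    case (3 j)
    have "E (Suc (Suc j)) l * E j l = E (Suc j) l ^ 3" by (rule rec)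
    also have "\<dots> = (e l ^ cc (Suc j)) ^ 3" using 3 by simp
    also have "\<dots> = e l ^ (3 * cc (Suc j))" by (simp add: power_mult[symmetric] mult.commute)
    also have "\<dots> = e l ^ cc (Suc (Suc j)) * e l ^ cc j"
      by (subst cc_rec[of j, symmetric]) (simp only: power_add)
    finally have "E (Suc (Suc j)) l * E j l = e l ^ cc (Suc (Suc j)) * E j l" using 3 by (simp del: cc.simps)
    then show ?case using Enz[of j] by (simp del: cc.simps)
  qed
  then show ?thesis unfolding E_def A_def B_def .
qed


section \<open>Part F: conjugation iterates\<close>

abbreviation hinv :: "('a \<Rightarrow> 'b) \<Rightarrow> 'b \<Rightarrow> 'a" where "hinv f \<equiv> inv_into UNIV f"

lemma kaut_bij: "k_aut \<sigma> \<Longrightarrow> bij \<sigma>" by (simp add: k_aut_def)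

lemma kaut_inv: assumes "k_aut \<sigma>" shows "k_aut (hinv \<sigma>)"
proof -
  have b: "bij \<sigma>" using assms by (simp add: k_aut_def)
  have h: "khom \<sigma>" using assms by (rule kaut_khom)
  have s: "\<sigma> (hinv \<sigma> y) = y" for y using b by (simp add: bij_is_surj surj_f_inv_f)
  have i: "hinv \<sigma> (\<sigma> y) = y" for y using b by (simp add: bij_is_inj inv_f_f)
  have "hinv \<sigma> (a + b) = hinv \<sigma> a + hinv \<sigma> b" for a b
    by (metis i s khom_add[OF h])
  moreover have "hinv \<sigma> (a * b) = hinv \<sigma> a * hinv \<sigma> b" for a b
    by (metis i s khom_mult[OF h])
  moreover have "hinv \<sigma> (rconst c) = rconst c" for c
    by (metis i khom_const[OF h])
  ultimately show ?thesis using bij_imp_bij_inv[OF b] by (simp add: k_aut_def)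
qed

lemma conj_al:
  fixes e :: "'n::{finite,linorder} \<Rightarrow> 'k::field"
  assumes ne: "i0 \<noteq> k0" and nz: "\<forall>i. e i \<noteq> 0"
  shows "Dm (al i0 k0 e) = hinv (Gm i0 k0) \<circ> Dm e \<circ> Gm i0 k0"
proof
  fix x
  let ?G = "Gm i0 k0 :: ('n, 'k) ratfun \<Rightarrow> _"
  have b: "bij ?G" by (rule kaut_bij[OF kaut_Gm[OF ne]])
  have "Dm (al i0 k0 e) x = hinv ?G (?G (Dm (al i0 k0 e) x))" using b by (simp add: bij_is_inj inv_f_f)
  also have "?G (Dm (al i0 k0 e) x) = Dm e (?G x)" using Gm_conj[OF ne nz] by (metis comp_apply)
  finally show "Dm (al i0 k0 e) x = (hinv ?G \<circ> Dm e \<circ> ?G) x" by simp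
qed

lemma conj_be:
  fixes e :: "'n::{finite,linorder} \<Rightarrow> 'k::field"
  assumes ne: "i0 \<noteq> k0" and nz: "\<forall>i. e i \<noteq> 0"
  shows "Dm (be i0 k0 e) = Gm i0 k0 \<circ> Dm e \<circ> hinv (Gm i0 k0)"
proof
  fix x
  let ?G = "Gm i0 k0 :: ('n, 'k) ratfun \<Rightarrow> _"
  have b: "bij ?G" by (rule kaut_bij[OF kaut_Gm[OF ne]])
  have "Dm (be i0 k0 e) x = Dm (be i0 k0 e) (?G (hinv ?G x))" using b by (simp add: bij_is_surj surj_f_inv_f)
  also have "\<dots> = ?G (Dm (al i0 k0 (be i0 k0 e)) (hinv ?G x))"
    using Gm_conj[OF ne be_nz[OF nz]] by (metis comp_apply)
  also have "\<dots> = ?G (Dm e (hinv ?G x))" using al_be[OF ne nz] by simp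
  finally show "Dm (be i0 k0 e) x = (?G \<circ> Dm e \<circ> hinv ?G) x" by simp
qed

lemma conj_be_pow:
  fixes e :: "'n::{finite,linorder} \<Rightarrow> 'k::field"
  assumes ne: "i0 \<noteq> k0" and nz: "\<forall>i. e i \<noteq> 0"
  shows "(Gm i0 k0 ^^ j) \<circ> Dm e \<circ> (hinv (Gm i0 k0) ^^ j) = Dm ((be i0 k0 ^^ j) e)"
proof (induction j)
  case 0 then show ?case by simp
next
  case (Suc j)
  have "(Gm i0 k0 ^^ Suc j) \<circ> Dm e \<circ> (hinv (Gm i0 k0) ^^ Suc j)
      = Gm i0 k0 \<circ> ((Gm i0 k0 ^^ j) \<circ> Dm e \<circ> (hinv (Gm i0 k0) ^^ j)) \<circ> hinv (Gm i0 k0)"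
    by (simp only: funpow.simps(2)[of _ "Gm i0 k0"] funpow_Suc_right[of _ "hinv (Gm i0 k0)"] o_assoc)
  also have "\<dots> = Dm ((be i0 k0 ^^ Suc j) e)"
    using conj_be[OF ne be_pow_nz[of e j i0 k0, OF nz]] by (simp only: Suc.IH funpow.simps(2) comp_apply)
  finally show ?case .
qed

lemma conj_al_pow:
  fixes e :: "'n::{finite,linorder} \<Rightarrow> 'k::field"
  assumes ne: "i0 \<noteq> k0" and nz: "\<forall>i. e i \<noteq> 0"
  shows "(hinv (Gm i0 k0) ^^ j) \<circ> Dm e \<circ> (Gm i0 k0 ^^ j) = Dm ((al i0 k0 ^^ j) e)"
proof (induction j)
  case 0 then show ?case by simp
next
  case (Suc j)
  have "(hinv (Gm i0 k0) ^^ Suc j) \<circ> Dm e \<circ> (Gm i0 k0 ^^ Suc j)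
      = hinv (Gm i0 k0) \<circ> ((hinv (Gm i0 k0) ^^ j) \<circ> Dm e \<circ> (Gm i0 k0 ^^ j)) \<circ> Gm i0 k0"
    by (simp only: funpow.simps(2)[of _ "hinv (Gm i0 k0)"] funpow_Suc_right[of _ "Gm i0 k0"] o_assoc)
  also have "\<dots> = Dm ((al i0 k0 ^^ Suc j) e)"
    using conj_al[OF ne al_pow_nz[of e j i0 k0, OF nz]] by (simp only: Suc.IH funpow.simps(2) comp_apply)
  finally show ?case .
qed

lemma X_formula:
  fixes e :: "'n::{finite,linorder} \<Rightarrow> 'k::field"
  assumes ne: "i0 \<noteq> k0" and nz: "\<forall>i. e i \<noteq> 0" and supp: "\<forall>l. l \<noteq> i0 \<longrightarrow> l \<noteq> k0 \<longrightarrow> e l = 1"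
  shows "((Gm i0 k0 ^^ j) \<circ> Dm e \<circ> (hinv (Gm i0 k0) ^^ j)) \<circ> ((hinv (Gm i0 k0) ^^ j) \<circ> Dm e \<circ> (Gm i0 k0 ^^ j))
     = Dm e ^^ cc j"
proof -
  have "((Gm i0 k0 ^^ j) \<circ> Dm e \<circ> (hinv (Gm i0 k0) ^^ j)) \<circ> ((hinv (Gm i0 k0) ^^ j) \<circ> Dm e \<circ> (Gm i0 k0 ^^ j))
      = Dm ((be i0 k0 ^^ j) e) \<circ> Dm ((al i0 k0 ^^ j) e)"
    by (simp add: conj_be_pow[OF ne nz] conj_al_pow[OF ne nz])
  also have "\<dots> = Dm (\<lambda>l. (be i0 k0 ^^ j) e l * (al i0 k0 ^^ j) e l)"
    by (rule Dm_comp[OF be_pow_nz[OF nz] al_pow_nz[OF nz]])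
  also have "\<dots> = Dm (\<lambda>l. e l ^ cc j)"
    by (simp add: E_formula[OF ne nz supp])
  also have "\<dots> = Dm e ^^ cc j" by (simp add: Dm_pow[OF nz])
  finally show ?thesis .
qed


section \<open>Part G: words\<close>

definition FW :: "('a \<Rightarrow> 'a) list \<Rightarrow> 'a \<Rightarrow> 'a" where
  "FW xs = foldr (\<lambda>a b. b \<circ> a) xs id"

lemma FW_Nil: "FW [] = id" by (simp add: FW_def)
lemma FW_Cons: "FW (a # xs) = FW xs \<circ> a" by (simp add: FW_def)

lemma FW_append: "FW (xs @ ys) = FW ys \<circ> FW xs"
  by (induction xs) (simp_all add: FW_Nil FW_Cons o_assoc)

lemma word_ball_Bir: "word_ball Bir S n = {FW xs | xs. set xs \<subseteq> S \<and> length xs = n}"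
  by (simp add: word_ball_def Bir_def FW_def)

lemma wb_comp: "x \<in> word_ball Bir S n \<Longrightarrow> y \<in> word_ball Bir S m \<Longrightarrow> y \<circ> x \<in> word_ball Bir S (n + m)"
  unfolding word_ball_Bir
proof clarify
  fix xs ys assume "set xs \<subseteq> S" "set ys \<subseteq> S" "n = length xs" "m = length ys"
  then show "\<exists>zs. FW ys \<circ> FW xs = FW zs \<and> set zs \<subseteq> S \<and> length zs = length xs + length ys"
    by (intro exI[of _ "xs @ ys"]) (simp add: FW_append)
qed

lemma wb_one: "s \<in> S \<Longrightarrow> s \<in> word_ball Bir S 1"
  unfolding word_ball_Bir by (intro CollectI exI[of _ "[s]"]) (simp add: FW_def)

lemma wb_zero: "id \<in> word_ball Bir S 0"
  unfolding word_ball_Bir by (intro CollectI exI[of _ "[]"]) (simp add: FW_def)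

lemma wb_pow: "s \<in> S \<Longrightarrow> s ^^ j \<in> word_ball Bir S j"
proof (induction j)
  case 0 then show ?case using wb_zero[of S] by (simp only: funpow_0 id_def)
next
  case (Suc j)
  have "s \<circ> s ^^ j \<in> word_ball Bir S (j + 1)" by (rule wb_comp[OF Suc.IH[OF Suc.prems] wb_one[OF Suc.prems]])
  then show ?case by (metis funpow.simps(2) Suc_eq_plus1)
qed

lemma funpow_id': "(id :: 'a \<Rightarrow> 'a) ^^ k = id"
  by (induction k) simp_all

lemma wb_mono: assumes "id \<in> S" "x \<in> word_ball Bir S n" "n \<le> m" shows "x \<in> word_ball Bir S m"
proof -
  have "id ^^ (m - n) \<in> word_ball Bir S (m - n)" by (rule wb_pow[OF assms(1)])
  then have "id \<circ> x \<in> word_ball Bir S (n + (m - n))" using wb_comp[OF assms(2)] by (simp only: funpow_id')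
  then show ?thesis using assms(3) by (simp only: id_o le_add_diff_inverse)
qed

lemma wb_X:
  assumes "G \<in> S" "G' \<in> S" "d \<in> S"
  shows "((G ^^ j) \<circ> d \<circ> (G' ^^ j)) \<circ> ((G' ^^ j) \<circ> d \<circ> (G ^^ j)) \<in> word_ball Bir S (4 * j + 2)"
proof -
  have g: "G ^^ j \<in> word_ball Bir S j" "G' ^^ j \<in> word_ball Bir S j" by (rule wb_pow, fact)+
  have d: "d \<in> word_ball Bir S 1" by (rule wb_one, fact)
  have p: "(G ^^ j) \<circ> d \<circ> (G' ^^ j) \<in> word_ball Bir S (j + 1 + j)"
    using wb_comp[OF wb_comp[OF g(2) d] g(1)] by (simp add: o_assoc)
  have q: "(G' ^^ j) \<circ> d \<circ> (G ^^ j) \<in> word_ball Bir S (j + 1 + j)"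
    using wb_comp[OF wb_comp[OF g(1) d] g(2)] by (simp add: o_assoc)
  have "((G ^^ j) \<circ> d \<circ> (G' ^^ j)) \<circ> ((G' ^^ j) \<circ> d \<circ> (G ^^ j)) \<in> word_ball Bir S ((j + 1 + j) + (j + 1 + j))"
    by (rule wb_comp[OF q p])
  moreover have "(j + 1 + j) + (j + 1 + j) = 4 * j + 2" by simp
  ultimately show ?thesis by (simp only:)
qed

lemma wb_list:
  assumes "\<And>i. i \<in> set xs \<Longrightarrow> f i \<in> word_ball Bir S m"
  shows "foldr (\<lambda>i g. f i \<circ> g) xs id \<in> word_ball Bir S (length xs * m)"
  using assms
proof (induction xs)
  case Nil then show ?case using wb_zero[of S] by (simp add: id_def)
next
  case (Cons a xs)
  have "f a \<circ> foldr (\<lambda>i g. f i \<circ> g) xs id \<in> word_ball Bir S (length xs * m + m)"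
  proof -
    have p: "\<And>i. i \<in> set xs \<Longrightarrow> f i \<in> word_ball Bir S m" using Cons.prems by simp
    have fa: "f a \<in> word_ball Bir S m" using Cons.prems by simp
    show ?thesis by (rule wb_comp[OF Cons.IH[OF p] fa])
  qed
  moreover have "foldr (\<lambda>i g. f i \<circ> g) (a # xs) id = f a \<circ> foldr (\<lambda>i g. f i \<circ> g) xs id" by simp
  moreover have "length (a # xs) * m = length xs * m + m" by simp
  ultimately show ?case by (simp only:)
qed

lemma Dm_list:
  fixes h :: "'i \<Rightarrow> 'n::{finite,linorder} \<Rightarrow> 'k::field"
  assumes "\<And>i. \<forall>l. h i l \<noteq> 0"
  shows "foldr (\<lambda>i g. Dm (h i) \<circ> g) xs id = Dm (\<lambda>l. prod_list (map (\<lambda>i. h i l) xs))"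
proof (induction xs)
  case Nil then show ?case by (simp add: Dm_one)
next
  case (Cons a xs)
  have nz: "\<forall>l. prod_list (map (\<lambda>i. h i l) xs) \<noteq> 0" using assms by (auto simp add: prod_list_zero_iff)
  show ?case using Cons Dm_comp[OF assms[of a] nz] by (simp add: comp_def)
qed

lemma pow_Bir: "x [^]\<^bsub>Bir\<^esub> (N::nat) = x ^^ N"
  by (induction N) (simp_all add: Bir_def)

lemma inv_Bir: assumes "k_aut \<sigma>" shows "inv\<^bsub>Bir\<^esub> \<sigma> = hinv \<sigma>"
proof -
  have b: "bij \<sigma>" using assms by (simp add: k_aut_def)
  show ?thesis unfolding m_inv_def
  proof (rule the_equality)
    show "hinv \<sigma> \<in> carrier Bir \<and> \<sigma> \<otimes>\<^bsub>Bir\<^esub> hinv \<sigma> = \<one>\<^bsub>Bir\<^esub> \<and> hinv \<sigma> \<otimes>\<^bsub>Bir\<^esub> \<sigma> = \<one>\<^bsub>Bir\<^esub>"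
      using kaut_inv[OF assms] b bij_is_surj[OF b] surj_iff[of \<sigma>] by (simp add: Bir_def bij_is_inj)
    fix y assume "y \<in> carrier Bir \<and> \<sigma> \<otimes>\<^bsub>Bir\<^esub> y = \<one>\<^bsub>Bir\<^esub> \<and> y \<otimes>\<^bsub>Bir\<^esub> \<sigma> = \<one>\<^bsub>Bir\<^esub>"
    then have "y \<circ> \<sigma> = id" "\<sigma> \<circ> y = id" by (simp_all add: Bir_def)
    then show "y = hinv \<sigma>" using inv_unique_comp by metis
  qed
qed


lemma exp_bound: "exp (real x) \<le> (4::real) ^ x"
proof -
  have "exp (real x) = exp 1 ^ x" using exp_of_nat_mult[of x 1] by simp
  also have "\<dots> \<le> 3 ^ x" by (rule power_mono[OF exp_le]) simp
  also have "\<dots> \<le> 4 ^ x" by (rule power_mono) simp_all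
  finally show ?thesis .
qed

lemma distortion_ge: "c [^]\<^bsub>G\<^esub> m \<in> word_ball G S n \<Longrightarrow> enat m \<le> distortion G S c n"
  unfolding distortion_def by (rule Sup_upper) blast

theorem lemma3p2:
  fixes u :: "('n::{finite,linorder}, 'k::field) ratfun \<Rightarrow> ('n, 'k) ratfun"
    and a :: "'n \<Rightarrow> 'k"
  assumes "card (UNIV :: 'n set) \<ge> 2"
    and "\<And>i. a i \<noteq> 0"
    and "u \<in> carrier Bir"
    and "\<And>i. u (rvar i) = rconst (a i) * rvar i"
  shows "\<exists>S. finite S \<and> S \<subseteq> carrier Bir \<and> \<one>\<^bsub>Bir\<^esub> \<in> S
           \<and> (\<forall>s\<in>S. inv\<^bsub>Bir\<^esub> s \<in> S) \<and> u \<in> generate Bir S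
           \<and> asym_preceq (\<lambda>n. exp (real n)) (distortion Bir S u)"
proof -
  have anz: "\<forall>i. a i \<noteq> 0" using assms(2) by simp
  have uk: "k_aut u" using assms(3) by (simp add: Bir_def)
  have "\<exists>k. k \<noteq> i" for i :: 'n
  proof (rule ccontr)
    assume "\<not> (\<exists>k. k \<noteq> i)"
    then have "(UNIV :: 'n set) = {i}" by auto
    then have "card (UNIV :: 'n set) = card {i}" by (rule arg_cong)
    then show False using assms(1) by simp
  qed
  then obtain kp :: "'n \<Rightarrow> 'n" where kp: "\<And>i. kp i \<noteq> i" by metis
  define ev :: "'n \<Rightarrow> 'n \<Rightarrow> 'k" where "ev i = (\<lambda>l. if l = i then a l else 1)" for i
  have evnz: "\<forall>l. ev i l \<noteq> 0" for i using anz by (simp add: ev_def)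
  have evsupp: "\<forall>l. l \<noteq> i \<longrightarrow> l \<noteq> kp i \<longrightarrow> ev i l = 1" for i by (simp add: ev_def)
  define D where "D i = (Dm (ev i) :: ('n, 'k) ratfun \<Rightarrow> _)" for i
  define G where "G i = (Gm i (kp i) :: ('n, 'k) ratfun \<Rightarrow> _)" for i
  define X where "X = insert u (range D \<union> range G)"
  define S where "S = insert id (X \<union> hinv ` X)"
  have kX: "k_aut x" if "x \<in> X" for x
    using that uk kaut_Dm[OF evnz] kaut_Gm[OF kp[symmetric]] by (auto simp: X_def D_def G_def)
  have kid: "k_aut (id :: ('n, 'k) ratfun \<Rightarrow> _)" by (simp add: k_aut_def)
  have kS: "k_aut x" if "x \<in> S" for x
    using that kX kaut_inv kid by (auto simp: S_def)
  have finS: "finite S" unfolding S_def X_def by simp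
  have subS: "S \<subseteq> carrier Bir" using kS by (auto simp: Bir_def)
  have oneS: "\<one>\<^bsub>Bir\<^esub> \<in> S" by (simp add: Bir_def S_def)
  have invS: "\<forall>s\<in>S. inv\<^bsub>Bir\<^esub> s \<in> S"
  proof
    fix s assume s: "s \<in> S"
    have e: "inv\<^bsub>Bir\<^esub> s = hinv s" by (rule inv_Bir[OF kS[OF s]])
    show "inv\<^bsub>Bir\<^esub> s \<in> S"
    proof -
      { assume "s = id" then have ?thesis using e by (simp add: S_def) }
      moreover { assume "s \<in> X" then have ?thesis using e by (simp add: S_def) }
      moreover { fix x assume x: "x \<in> X" "s = hinv x"
        then have "hinv s = x" using kX[OF x(1)] by (simp add: inv_inv_eq k_aut_def)
        then have ?thesis using e x by (simp add: S_def) }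
      ultimately show ?thesis using s by (auto simp: S_def)
    qed
  qed
  have uS: "u \<in> S" by (simp add: S_def X_def)
  have genS: "u \<in> generate Bir S" by (rule generate.incl[OF uS])
  have u_eq: "u = Dm a"
    by (rule khom_unique[OF kaut_khom[OF uk] khom_Dm[OF anz]]) (simp add: assms(4) Dm_rvar[OF anz])
  define M where "M = card (UNIV :: 'n set)"
  define L where "L = sorted_list_of_set (UNIV :: 'n set)"
  have lenL: "length L = M" by (simp add: L_def M_def)
  have key: "u [^]\<^bsub>Bir\<^esub> cc j \<in> word_ball Bir S (M * (4 * j + 2))" for j
  proof -
    have "u [^]\<^bsub>Bir\<^esub> cc j = Dm (\<lambda>l. a l ^ cc j)" by (simp add: pow_Bir u_eq Dm_pow[OF anz])
    also have "\<dots> = Dm (\<lambda>l. prod_list (map (\<lambda>i. ev i l ^ cc j) L))"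
    proof -
      have "prod_list (map (\<lambda>i. ev i l ^ cc j) L) = a l ^ cc j" for l
      proof -
        have "prod_list (map (\<lambda>i. ev i l ^ cc j) L) = (\<Prod>i\<in>UNIV. ev i l ^ cc j)"
          by (simp add: L_def prod.distinct_set_conv_list[symmetric])
        also have "\<dots> = (\<Prod>i\<in>UNIV. if l = i then a l ^ cc j else 1)"
          by (rule prod.cong) (auto simp: ev_def)
        also have "\<dots> = a l ^ cc j" by simp
        finally show ?thesis .
      qed
      then show ?thesis by simp
    qed
    also have "\<dots> = foldr (\<lambda>i g. Dm (\<lambda>l. ev i l ^ cc j) \<circ> g) L id"
      by (rule Dm_list[symmetric]) (simp add: evnz)
    finally have ueq: "u [^]\<^bsub>Bir\<^esub> cc j = foldr (\<lambda>i g. Dm (\<lambda>l. ev i l ^ cc j) \<circ> g) L id" .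
    have "Dm (\<lambda>l. ev i l ^ cc j) \<in> word_ball Bir S (4 * j + 2)" for i
    proof -
      have "Dm (\<lambda>l. ev i l ^ cc j) = Dm (ev i) ^^ cc j" by (simp add: Dm_pow[OF evnz])
      also have "\<dots> = ((G i ^^ j) \<circ> D i \<circ> (hinv (G i) ^^ j)) \<circ> ((hinv (G i) ^^ j) \<circ> D i \<circ> (G i ^^ j))"
        unfolding D_def G_def by (rule X_formula[OF kp[symmetric] evnz evsupp, symmetric])
      finally have eq: "Dm (\<lambda>l. ev i l ^ cc j) = \<dots>" .
      have "G i \<in> S" "hinv (G i) \<in> S" "D i \<in> S" by (simp_all add: S_def X_def)
      then show ?thesis unfolding eq by (rule wb_X)
    qed
    then have "foldr (\<lambda>i g. Dm (\<lambda>l. ev i l ^ cc j) \<circ> g) L id \<in> word_ball Bir S (length L * (4 * j + 2))"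
      by (intro wb_list)
    then show ?thesis using ueq lenL by simp
  qed
  have Mpos: "M \<ge> 1" using assms(1) by (simp add: M_def)
  have dist: "real (cc (2 * x)) \<le> ereal_of_enat (distortion Bir S u (10 * M * x))" if "x \<ge> 1" for x
  proof -
    have "M * (4 * (2 * x) + 2) \<le> 10 * M * x" using that by (simp add: algebra_simps)
    then have "u [^]\<^bsub>Bir\<^esub> cc (2 * x) \<in> word_ball Bir S (10 * M * x)"
      using wb_mono[OF _ key[of "2 * x"]] by (simp add: S_def)
    then have "enat (cc (2 * x)) \<le> distortion Bir S u (10 * M * x)" by (rule distortion_ge)
    then show ?thesis by (metis ereal_of_enat_le_iff ereal_of_enat_simps(1))
  qed
  have pre: "asym_preceq (\<lambda>n. exp (real n)) (distortion Bir S u)"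
    unfolding asym_preceq_def
  proof (intro exI[of _ "1::real"] exI[of _ "10 * M"] exI[of _ "1::real"] conjI allI)
    show "(0::real) < 1" by simp
    show "0 < 10 * M" using Mpos by simp
    show "(0::real) < 1" by simp
    fix x :: nat
    show "ereal (exp (real x)) \<le> ereal 1 * ereal_of_enat (distortion Bir S u (10 * M * x)) + ereal 1"
    proof (cases "x = 0")
      case True
      have "ereal 1 \<le> ereal_of_enat (distortion Bir S u (10 * M * x)) + ereal 1"
        by (rule add_increasing[OF ereal_of_enat_nonneg order_refl])
      then show ?thesis using True by simp
    next
      case False
      then have x1: "x \<ge> 1" by simp
      have "exp (real x) \<le> (4::real) ^ x" by (rule exp_bound)
      also have "\<dots> = 2 ^ (2 * x)" by (simp add: power_mult)
      also have "\<dots> \<le> real (cc (2 * x))" using cc_ge[of "2 * x"]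
        by (metis of_nat_le_iff of_nat_numeral of_nat_power)
      finally have "ereal (exp (real x)) \<le> ereal (real (cc (2 * x)))" by simp
      also have "\<dots> \<le> ereal_of_enat (distortion Bir S u (10 * M * x))" by (rule dist[OF x1])
      finally show ?thesis by (simp add: ereal_of_enat_nonneg add_increasing2)
    qed
  qed
  show ?thesis using finS subS oneS invS genS pre by blast
qed

end
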